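(* Let $\alpha \in (0,1)$ and $x \in I_\alpha$. Then $x \in \mathbb Q$ if and only if there is an integer $N \ge 0$ such that $T_\alpha^N(x) = 1$.
   Context: For $\alpha \in (0,1)$ let $D_\alpha = \bigcup_{n \ge 1} \big[ \frac{1}{n+\alpha}, \frac1n \big]$, $D_\alpha^{\mathsf c} = [0,1]\setminus D_\alpha$, $I_\alpha = [\min\{\alpha,1-\alpha\},1]$, and $T_\alpha : I_\alpha \to I_\alpha$, $T_\alpha(x) = \frac1x - \lfloor \frac1x \rfloor$ if $x \in D_\alpha^{\mathsf c}$, $T_\alpha(x) = 1 + \lfloor \frac1x \rfloor - \frac1x$ if $x \in D_\alpha$. *)

theory Defs
  imports Complex_Main
begin

definition D_alpha :: "real \<Rightarrow> real set" where
  "D_alpha \<alpha> = (\<Union>n\<in>{1::nat..}. {1 / (real n + \<alpha>) .. 1 / real n})"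

definition I_alpha :: "real \<Rightarrow> real set" where
  "I_alpha \<alpha> = {min \<alpha> (1 - \<alpha>) .. 1}"

definition T_alpha :: "real \<Rightarrow> real \<Rightarrow> real" where
  "T_alpha \<alpha> x = (if x \<in> D_alpha \<alpha> then 1 + real_of_int \<lfloor>1 / x\<rfloor> - 1 / x
                    else 1 / x - real_of_int \<lfloor>1 / x\<rfloor>)"

end

theory Submission
  imports Defs
begin

lemma inv_int_in_D:
  assumes "0 < \<alpha>" "x > 0" "x \<le> 1" "1 / x = real_of_int k"
  shows "x \<in> D_alpha \<alpha>"
proof -
  have k1: "k \<ge> 1"
  proof -
    have "1 / 1 \<le> 1 / x" by (rule divide_left_mono) (use assms in auto)
    then have "1 / x \<ge> 1" by simp
    then have "real_of_int k \<ge> 1" using assms(4) by simp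
    thus ?thesis by simp
  qed
  have "x = 1 / (1 / x)" by simp
  also have "\<dots> = 1 / real (nat k)" using assms(4) k1 by simp
  finally have xk: "x = 1 / real (nat k)" .
  show ?thesis unfolding D_alpha_def
  proof (rule UN_I[of "nat k"])
    show "nat k \<in> {1..}" using k1 by simp
    have "1 / (real (nat k) + \<alpha>) \<le> 1 / real (nat k)"
      using k1 assms(1) by (intro divide_left_mono) auto
    thus "x \<in> {1 / (real (nat k) + \<alpha>)..1 / real (nat k)}" using xk by simp
  qed
qed

lemma T_range:
  assumes "0 < \<alpha>" "x > 0" "x \<le> 1"
  shows "0 < T_alpha \<alpha> x \<and> T_alpha \<alpha> x \<le> 1"
proof (cases "1 / x = real_of_int \<lfloor>1/x\<rfloor>")
  case True
  then have "x \<in> D_alpha \<alpha>" using inv_int_in_D assms by blast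
  then show ?thesis using True unfolding T_alpha_def by simp
next
  case False
  have a: "real_of_int \<lfloor>1/x\<rfloor> < 1/x" using False floor_correct[of "1/x"] by linarith
  have b: "1/x < real_of_int \<lfloor>1/x\<rfloor> + 1" using floor_correct[of "1/x"] by simp
  show ?thesis
  proof (cases "x \<in> D_alpha \<alpha>")
    case True then show ?thesis by (simp only: T_alpha_def if_P[OF True] if_True) (use a b in linarith)
  next
    case False then show ?thesis by (simp only: T_alpha_def if_not_P[OF False] if_False) (use a b in linarith)
  qed
qed

lemma T_denom:
  fixes a q :: int
  assumes "a > 0" "q > 0" "x = real_of_int a / real_of_int q"
  shows "\<exists>b::int. T_alpha \<alpha> x = real_of_int b / real_of_int a"
proof -
  have ix: "1 / x = real_of_int q / real_of_int a" using assms by simp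
  define f where "f = \<lfloor>1/x\<rfloor>"
  show ?thesis
  proof (cases "x \<in> D_alpha \<alpha>")
    case True
    have "T_alpha \<alpha> x = 1 + real_of_int f - 1/x" using True by (simp add: T_alpha_def f_def)
    also have "\<dots> = real_of_int ((1+f)*a - q) / real_of_int a"
      using assms(1) unfolding ix by (simp add: field_simps)
    finally have "T_alpha \<alpha> x = real_of_int ((1+f)*a - q) / real_of_int a" .
    then show ?thesis by blast
  next
    case False
    have "T_alpha \<alpha> x = 1/x - real_of_int f" using False by (simp add: T_alpha_def f_def)
    also have "\<dots> = real_of_int (q - f*a) / real_of_int a"
      using assms(1) unfolding ix by (simp add: field_simps)
    finally have "T_alpha \<alpha> x = real_of_int (q - f*a) / real_of_int a" .
    then show ?thesis by blast
  qed
qed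

lemma rat_reaches:
  assumes "0 < \<alpha>"
  shows "\<forall>a x. 0 < a \<and> a \<le> q \<and> x = real_of_int a / real_of_int q \<longrightarrow> (\<exists>N::nat. (T_alpha \<alpha> ^^ N) x = 1)"
proof (induction "nat q" arbitrary: q rule: less_induct)
  case (less q)
  show ?case
  proof (intro allI impI)
    fix a x assume h: "0 < a \<and> a \<le> q \<and> x = real_of_int a / real_of_int q"
    show "\<exists>N::nat. (T_alpha \<alpha> ^^ N) x = 1"
    proof (cases "a = q")
      case True
      then have "x = 1" using h by simp
      then show ?thesis by (intro exI[of _ 0]) simp
    next
      case False
      then have aq: "a < q" using h by simp
      have x01: "0 < x" "x \<le> 1" using h by auto
      obtain b where b: "T_alpha \<alpha> x = real_of_int b / real_of_int a"
        using T_denom[of a q x \<alpha>] h by auto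
      have r: "0 < T_alpha \<alpha> x" "T_alpha \<alpha> x \<le> 1" using T_range[OF assms x01] by auto
      have "0 < b" using r(1) b h by (simp add: zero_less_divide_iff)
      moreover have "b \<le> a" using r(2) b h by (simp add: divide_le_eq)
      ultimately obtain N where "(T_alpha \<alpha> ^^ N) (T_alpha \<alpha> x) = 1"
        using less[of a] aq h b by force
      then have "(T_alpha \<alpha> ^^ Suc N) x = 1" by (simp add: funpow_Suc_right del: funpow.simps)
      then show ?thesis by blast
    qed
  qed
qed

lemma T_rat_back:
  assumes "T_alpha \<alpha> x \<in> \<rat>"
  shows "x \<in> \<rat>"
proof -
  have "1 / x \<in> \<rat>"
  proof (cases "x \<in> D_alpha \<alpha>")
    case True
    then have "1 / x = 1 + real_of_int \<lfloor>1/x\<rfloor> - T_alpha \<alpha> x" unfolding T_alpha_def by simp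
    then show ?thesis using assms by (metis Rats_1 Rats_add Rats_diff Rats_of_int)
  next
    case False
    then have "1 / x = T_alpha \<alpha> x + real_of_int \<lfloor>1/x\<rfloor>" unfolding T_alpha_def by simp
    then show ?thesis using assms by (metis Rats_add Rats_of_int)
  qed
  then have "1 / (1 / x) \<in> \<rat>" by (rule Rats_divide[OF Rats_1])
  then show ?thesis by simp
qed

lemma iter_back: "(T_alpha \<alpha> ^^ N) x \<in> \<rat> \<Longrightarrow> x \<in> \<rat>"
proof (induction N arbitrary: x)
  case 0 then show ?case by simp
next
  case (Suc N)
  then have "T_alpha \<alpha> x \<in> \<rat>" by (simp add: funpow_Suc_right del: funpow.simps)
  then show ?case by (rule T_rat_back)
qed

theorem proposition2p1:
  fixes \<alpha> x :: real
  assumes "0 < \<alpha>" and "\<alpha> < 1" and "x \<in> I_alpha \<alpha>"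
  shows "x \<in> \<rat> \<longleftrightarrow> (\<exists>N::nat. (T_alpha \<alpha> ^^ N) x = 1)"
proof
  assume "x \<in> \<rat>"
  then obtain a q :: int where q: "q > 0" "x = real_of_int a / real_of_int q"
    by (metis Rats_cases')
  have x01: "0 < x" "x \<le> 1" using assms unfolding I_alpha_def by auto
  have "0 < a" using x01 q by (simp add: zero_less_divide_iff)
  moreover have "a \<le> q" using x01 q by (simp add: divide_le_eq)
  ultimately show "\<exists>N::nat. (T_alpha \<alpha> ^^ N) x = 1" using rat_reaches[OF assms(1), of q] q by blast
next
  assume "\<exists>N::nat. (T_alpha \<alpha> ^^ N) x = 1"
  then obtain N where "(T_alpha \<alpha> ^^ N) x = 1" by blast
  then show "x \<in> \<rat>" using iter_back[where \<alpha>=\<alpha> and N=N and x=x] by simp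
qed

end
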